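(* In the setting described in the context, let $\hat u_0=\min\{x\in[v,z_0]: f^2(x)=d\}$, and for $n\ge1$ let $\hat\mu'_{m,n}=\max\{x\in[v,\hat u_0]: f^{m+2n}(x)=d\}$ (these sets are nonempty). Then for each $n\ge1$, every periodic point of $f$ in $[\hat\mu'_{m,n},\hat u_0]$ whose least period is odd has least period $\ge m+2n$.
   Context: Let $I$ be a compact interval and $f:I\to I$ continuous; $f^1=f$, $f^n=f\circ f^{n-1}$. A point $x_0$ is a periodic point of least period $k$ (a period-$k$ point) if $f^k(x_0)=x_0$ and $f^i(x_0)\ne x_0$ for $0<i<k$. Let $m\ge3$ be odd and let $P$ be a periodic orbit of $f$ of least period $m$. Put $e=f^{m-1}(\min P)$. Let $v\in[\min P,e)$ be a point with $f(v)=e$, and let $z\in(v,e)$ be a fixed point of $f$ (such points exist). Define $z_0=\min\{x\in[v,z]: f^2(x)=x\}$ and $d=\max\{x\in[\min P,v]: f^2(x)=z_0\}$ (both sets are nonempty). *)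

theory Defs
  imports "HOL-Analysis.Analysis"
begin

definition least_period :: "(real \<Rightarrow> real) \<Rightarrow> real \<Rightarrow> nat \<Rightarrow> bool" where
  "least_period f x k \<longleftrightarrow> 0 < k \<and> (f ^^ k) x = x \<and> (\<forall>i. 0 < i \<and> i < k \<longrightarrow> (f ^^ i) x \<noteq> x)"

end

theory Submission imports Defs begin

lemma iter_props:
  fixes f :: "real \<Rightarrow> real"
  assumes "continuous_on S f" "f ` S \<subseteq> S"
  shows "continuous_on S (f^^n) \<and> (f^^n) ` S \<subseteq> S"
proof (induction n)
  case 0 then show ?case by (simp add: continuous_on_id)
next
  case (Suc n)
  then have "continuous_on S (f \<circ> (f^^n))"
    by (meson assms(1) continuous_on_compose continuous_on_subset)
  then show ?case using Suc assms(2) by (auto simp: image_subset_iff)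
qed

lemma ivt_any:
  fixes h :: "real \<Rightarrow> real"
  assumes "l \<le> r" "continuous_on {l..r} h" "min (h l) (h r) \<le> t" "t \<le> max (h l) (h r)"
  shows "\<exists>x\<in>{l..r}. h x = t"
proof (cases "h l \<le> h r")
  case True
  then show ?thesis using IVT'[of h l t r] assms by auto
next
  case False
  then show ?thesis using IVT2'[of h r t l] assms by auto
qed

lemma funpow_fixed: "h x = x \<Longrightarrow> (h^^q) x = x"
  by (induction q) auto

lemma cover:
  fixes f :: "real \<Rightarrow> real"
  assumes cont: "continuous_on {a..b} f" and maps: "f ` {a..b} \<subseteq> {a..b}"
    and "a \<le> w" "w \<le> u0" "u0 \<le> b" "(f^^t) w \<le> d" "z0 \<le> (f^^t) u0"
    and gd: "(f^^2) d = z0" and gu: "(f^^2) u0 = d" and "d \<le> u0" "u0 \<le> z0" "a \<le> d"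
  shows "\<forall>s\<in>{d..z0}. \<exists>x\<in>{w..u0}. (f^^(t+2*c)) x = s"
proof (induction c)
  case 0
  have "continuous_on {w..u0} (f^^t)"
    using iter_props[OF cont maps] assms by (meson atLeastatMost_subset_iff continuous_on_subset)
  then show ?case using ivt_any[of w u0 "f^^t"] assms by fastforce
next
  case (Suc c)
  show ?case
  proof
    fix s assume s: "s \<in> {d..z0}"
    have "continuous_on {d..u0} (f^^2)"
      using iter_props[OF cont maps] assms by (meson atLeastatMost_subset_iff continuous_on_subset order_trans)
    then obtain r where r: "r \<in> {d..u0}" "(f^^2) r = s"
      using ivt_any[of d u0 "f^^2" s] assms s by fastforce
    then have "r \<in> {d..z0}" using assms by auto
    then obtain x where x: "x \<in> {w..u0}" "(f^^(t+2*c)) x = r" using Suc by blast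
    have "(f^^(t+2*Suc c)) x = (f^^2) ((f^^(t+2*c)) x)"
      by (metis add.commute add_Suc_right comp_apply funpow_add mult_Suc_right)
    then show "\<exists>x\<in>{w..u0}. (f^^(t+2*Suc c)) x = s" using x r by auto
  qed
qed

theorem lemma10:
  fixes f :: "real \<Rightarrow> real" and a b p0 v z :: real and m :: nat
  assumes ab: "a \<le> b"
    and cont: "continuous_on {a..b} f"
    and maps: "f ` {a..b} \<subseteq> {a..b}"
    and m: "odd m" "m \<ge> 3"
    and p0: "p0 \<in> {a..b}" "least_period f p0 m"
    and v: "v \<in> {Min ((\<lambda>i. (f ^^ i) p0) ` {..<m}) ..< (f ^^ (m - 1)) (Min ((\<lambda>i. (f ^^ i) p0) ` {..<m}))}"
    and fv: "f v = (f ^^ (m - 1)) (Min ((\<lambda>i. (f ^^ i) p0) ` {..<m}))"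
    and z: "z \<in> {v <..< (f ^^ (m - 1)) (Min ((\<lambda>i. (f ^^ i) p0) ` {..<m}))}" "f z = z"
  shows "\<forall>n::nat. n \<ge> 1 \<longrightarrow>
    (let P = (\<lambda>i. (f ^^ i) p0) ` {..<m};
         z0 = Inf {x \<in> {v..z}. (f ^^ 2) x = x};
         d = Sup {x \<in> {Min P..v}. (f ^^ 2) x = z0};
         u0 = Inf {x \<in> {v..z0}. (f ^^ 2) x = d};
         mu = Sup {x \<in> {v..u0}. (f ^^ (m + 2 * n)) x = d}
     in \<forall>y \<in> {mu..u0}. \<forall>k. least_period f y k \<and> odd k \<longrightarrow> k \<ge> m + 2 * n)"
proof (intro allI impI)
  fix n :: nat assume n1: "n \<ge> 1"
  define P where "P = (\<lambda>i. (f ^^ i) p0) ` {..<m}"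
  define p where "p = Min P"
  define e where "e = (f^^(m-1)) p"
  have contn: "\<And>k. continuous_on {a..b} (f^^k)" and mapn: "\<And>k. (f^^k) ` {a..b} \<subseteq> {a..b}"
    using iter_props[OF cont maps] by auto
  have contab: "\<And>k l r. a \<le> l \<Longrightarrow> r \<le> b \<Longrightarrow> continuous_on {l..r} (f^^k)"
    using contn by (meson atLeastatMost_subset_iff continuous_on_subset order_refl)
  have finP: "finite P" "P \<noteq> {}" using m by (auto simp: P_def lessThan_empty_iff)
  have per: "(f^^m) p0 = p0" using p0(2) by (simp add: least_period_def)
  have rep: "\<And>q. (f^^(m*q)) p0 = p0"
  proof -
    fix q show "(f^^(m*q)) p0 = p0"
      by (induction q) (simp_all add: funpow_add per)
  qed
  have modm: "\<And>k. (f^^k) p0 = (f^^(k mod m)) p0"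
  proof -
    fix k :: nat
    have "(f^^k) p0 = (f^^(k mod m + m * (k div m))) p0" by simp
    also have "\<dots> = (f^^(k mod m)) ((f^^(m * (k div m))) p0)" by (simp only: funpow_add comp_apply)
    finally show "(f^^k) p0 = (f^^(k mod m)) p0" using rep by simp
  qed
  have inP: "\<And>k. (f^^k) p0 \<in> P"
    using m by (subst modm) (auto simp: P_def)
  have pP: "p \<in> P" using finP by (simp add: p_def)
  then obtain j where j: "p = (f^^j) p0" by (auto simp: P_def)
  have orbp: "\<And>k. (f^^k) p = (f^^(k+j)) p0" by (simp add: j funpow_add)
  have pmin: "\<And>q. q \<in> P \<Longrightarrow> p \<le> q" using finP by (simp add: p_def)
  have Pab: "\<And>q. q \<in> P \<Longrightarrow> q \<in> {a..b}" using mapn p0(1) unfolding P_def by blast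
  have orbP: "\<And>k. (f^^k) p \<in> P" using orbp inP by simp
  have pge: "\<And>k. p \<le> (f^^k) p" using orbP pmin by blast
  have fmp: "(f^^m) p = p" using orbp j modm[of "m+j"] modm[of j] by simp
  have fe: "f e = p"
  proof -
    have "f e = (f^^(Suc (m-1))) p" by (simp add: e_def)
    also have "Suc (m-1) = m" using m by simp
    finally show ?thesis using fmp by simp
  qed
  have eP: "e \<in> P" using orbP by (simp add: e_def)
  have gpow: "\<And>q x. ((f^^2)^^q) x = (f^^(2*q)) x" by (simp add: funpow_mult)
  have eg: "e = ((f^^2)^^((m-1) div 2)) p"
  proof -
    have "2 * ((m-1) div 2) = m - 1" using m by simp
    then show ?thesis by (simp add: gpow e_def)
  qed
  have vv: "p \<le> v" "v < e" using v by (simp_all add: p_def P_def e_def)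
  have fv': "f v = e" using fv by (simp add: p_def P_def e_def)
  have zz: "v < z" "z < e" "f z = z" using z by (simp_all add: p_def P_def e_def)
  have gv: "(f^^2) v = p" using fv' fe by (simp add: numeral_2_eq_2)
  have gz: "(f^^2) z = z" using zz by (simp add: numeral_2_eq_2)
  have pab: "a \<le> p" "e \<le> b" using Pab pP eP by auto
  have pv: "p < v"
  proof (rule ccontr)
    assume "\<not> p < v"
    then have "v = p" using vv by simp
    then have "(f^^2) p = p" using gv by simp
    then have "e = p" using eg funpow_fixed by metis
    then show False using vv \<open>v = p\<close> by simp
  qed
  define S1 where "S1 = {x \<in> {v..z}. (f ^^ 2) x = x}"
  define z0 where "z0 = Inf S1"
  have closed1: "closed S1"
  proof -
    have "continuous_on {v..z} (\<lambda>x. (f^^2) x - x)"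
      using contab[of v z 2] pab vv zz pv by (intro continuous_intros) auto
    then have "closed {x \<in> {v..z}. (\<lambda>x. (f^^2) x - x) x = 0}"
      by (intro continuous_closed_preimage_constant) auto
    then show ?thesis by (simp add: S1_def)
  qed
  have zS1: "z \<in> S1" using gz zz by (simp add: S1_def)
  have z0S1: "z0 \<in> S1" unfolding z0_def
    using closed1 zS1 by (intro closed_contains_Inf) (auto simp: S1_def bdd_below_def)
  have z0le: "\<And>x. x \<in> S1 \<Longrightarrow> z0 \<le> x" unfolding z0_def
    by (rule cInf_lower) (auto simp: S1_def bdd_below_def)
  have z0r: "v \<le> z0" "z0 \<le> z" "(f^^2) z0 = z0" using z0S1 by (auto simp: S1_def)
  have vz0: "v < z0" using z0r gv pv by (metis order_le_less less_irrefl)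
  have glt: "\<And>x. v \<le> x \<Longrightarrow> x < z0 \<Longrightarrow> (f^^2) x < x"
  proof (rule ccontr)
    fix x assume x: "v \<le> x" "x < z0" "\<not> (f^^2) x < x"
    have "continuous_on {v..x} (\<lambda>t. (f^^2) t - t)"
      using contab[of v x 2] pab vv zz pv x z0r by (intro continuous_intros) auto
    then obtain t where t: "t \<in> {v..x}" "(f^^2) t - t = 0"
      using ivt_any[of v x "\<lambda>t. (f^^2) t - t" 0] x gv pv by fastforce
    then have "t \<in> S1" using x z0r by (auto simp: S1_def)
    then show False using z0le t x by fastforce
  qed
  have fz0: "z0 \<le> f z0"
  proof (rule ccontr)
    assume a1: "\<not> z0 \<le> f z0"
    have "continuous_on {v..z0} (\<lambda>t. f t - t)"
      using contab[of v z0 1] pab vv zz pv z0r by (intro continuous_intros) auto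
    then obtain t where t: "t \<in> {v..z0}" "f t - t = 0"
      using ivt_any[of v z0 "\<lambda>t. f t - t" 0] a1 fv' vv vz0 by fastforce
    then have "t \<noteq> z0" using a1 by auto
    then have "t < z0" using t by auto
    moreover have "(f^^2) t = t" using t by (simp add: numeral_2_eq_2)
    ultimately show False using glt t by fastforce
  qed
  define S2 where "S2 = {x \<in> {p..v}. (f ^^ 2) x = z0}"
  define d where "d = Sup S2"
  have ex2: "\<exists>x\<in>{p..v}. z0 \<le> (f^^2) x"
  proof (rule ccontr)
    assume "\<not> ?thesis"
    then have all: "\<And>x. x\<in>{p..v} \<Longrightarrow> (f^^2) x < z0" using not_le by (metis atLeastAtMost_iff)
    have "\<And>i. ((f^^2)^^i) p < z0"
    proof -
      fix i show "((f^^2)^^i) p < z0"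
      proof (induction i)
        case 0 then show ?case using pv vz0 by simp
      next
        case (Suc i)
        define x where "x = ((f^^2)^^i) p"
        have "p \<le> x" using pge gpow by (simp add: x_def)
        have "(f^^2) x < z0"
        proof (cases "x \<le> v")
          case True then show ?thesis using all \<open>p \<le> x\<close> by simp
        next
          case False then show ?thesis using glt[of x] Suc x_def by fastforce
        qed
        then show ?case by (simp add: x_def)
      qed
    qed
    then have "e < z0" using eg by simp
    then show False using z0r zz by simp
  qed
  have S2ne: "S2 \<noteq> {}"
  proof -
    obtain x where x: "x \<in> {p..v}" "z0 \<le> (f^^2) x" using ex2 by blast
    obtain w where "w \<in> {x..v}" "(f^^2) w = z0"
    proof -
      have "a \<le> x" "v \<le> b" "x \<le> v" using x pab vv by auto
      then have "continuous_on {x..v} (f^^2)" using contab by blast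
      moreover have "min ((f ^^ 2) x) ((f ^^ 2) v) \<le> z0" "z0 \<le> max ((f ^^ 2) x) ((f ^^ 2) v)"
        using x gv pv vz0 by auto
      ultimately show thesis using ivt_any[of x v "f^^2" z0] \<open>x \<le> v\<close> that by blast
    qed
    then show ?thesis using x by (auto simp: S2_def)
  qed
  have closed2: "closed S2" unfolding S2_def
    using contab[of p v 2] pab vv zz by (intro continuous_closed_preimage_constant) auto
  have dS2: "d \<in> S2" unfolding d_def
    using closed2 S2ne by (intro closed_contains_Sup) (auto simp: S2_def bdd_above_def)
  have dr: "p \<le> d" "d \<le> v" "(f^^2) d = z0" using dS2 by (auto simp: S2_def)
  define S3 where "S3 = {x \<in> {v..z0}. (f ^^ 2) x = d}"
  define u0 where "u0 = Inf S3"
  have S3ne: "S3 \<noteq> {}"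
  proof -
    obtain w where "w \<in> {v..z0}" "(f^^2) w = d"
      using ivt_any[of v z0 "f^^2" d] contab[of v z0 2] gv z0r vz0 pab dr vv zz by fastforce
    then show ?thesis by (auto simp: S3_def)
  qed
  have closed3: "closed S3" unfolding S3_def
    using contab[of v z0 2] pab vv zz z0r by (intro continuous_closed_preimage_constant) auto
  have u0S3: "u0 \<in> S3" unfolding u0_def
    using closed3 S3ne by (intro closed_contains_Inf) (auto simp: S3_def bdd_below_def)
  have u0le: "\<And>x. x \<in> S3 \<Longrightarrow> u0 \<le> x" unfolding u0_def
    by (rule cInf_lower) (auto simp: S3_def bdd_below_def)
  have u0r: "v \<le> u0" "u0 \<le> z0" "(f^^2) u0 = d" using u0S3 by (auto simp: S3_def)
  have gle: "\<And>y. v \<le> y \<Longrightarrow> y \<le> u0 \<Longrightarrow> (f^^2) y \<le> d"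
  proof (rule ccontr)
    fix y assume y: "v \<le> y" "y \<le> u0" "\<not> (f^^2) y \<le> d"
    obtain x where x: "x \<in> {v..y}" "(f^^2) x = d"
      using ivt_any[of v y "f^^2" d] contab[of v y 2] gv y dr pab u0r z0r zz vv by fastforce
    then have "x \<in> S3" using y u0r by (auto simp: S3_def)
    then have "u0 \<le> x" by (rule u0le)
    then have "y = u0" using x y by auto
    then show False using y u0r by simp
  qed
  have f4: "(f^^4) u0 = z0"
  proof -
    have "f^^4 = f^^2 \<circ> f^^2" using funpow_add[of 2 2 f] by simp
    then have "(f^^4) u0 = (f^^2) ((f^^2) u0)" by simp
    then show ?thesis using u0r dr by simp
  qed
  have fodd: "\<And>t. odd t \<Longrightarrow> 5 \<le> t \<Longrightarrow> (f^^t) u0 = f z0"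
  proof -
    fix t :: nat assume t: "odd t" "5 \<le> t"
    obtain q0 where q0: "t = 2*q0+1" using t(1) oddE by blast
    define q where "q = q0 - 2"
    have q: "t = Suc (2*q) + 4" using q0 t(2) by (simp add: q_def)
    have "f^^t = f^^(Suc (2*q)) \<circ> f^^4" unfolding q by (rule funpow_add)
    then have "(f^^t) u0 = (f^^(Suc (2*q))) ((f^^4) u0)" by simp
    also have "\<dots> = f (((f^^2)^^q) z0)" using f4 by (simp add: gpow)
    also have "\<dots> = f z0" using funpow_fixed[of "f^^2" z0] z0r by simp
    finally show "(f^^t) u0 = f z0" .
  qed
  have uab: "a \<le> v" "u0 \<le> b" "a \<le> d" using pab vv u0r z0r zz pv dr by auto
  define S4 where "S4 = {x \<in> {v..u0}. (f ^^ (m + 2 * n)) x = d}"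
  define mu where "mu = Sup S4"
  have S4ne: "S4 \<noteq> {}"
  proof -
    have "f^^(m+2) = f^^m \<circ> f^^2" by (rule funpow_add)
    then have a1: "(f^^(m+2)) v = p" using gv fmp by simp
    have a2: "(f^^(m+2)) u0 = f z0" by (rule fodd) (use m in auto)
    have "m + 2 + 2 * (n - 1) = m + 2 * n" using n1 by simp
    moreover have "\<forall>s\<in>{d..z0}. \<exists>x\<in>{v..u0}. (f^^(m+2+2*(n-1))) x = s"
      by (rule cover[OF cont maps]) (use uab u0r a1 a2 dr fz0 vv z0r pv in auto)
    moreover have "d \<in> {d..z0}" using dr vz0 by auto
    ultimately obtain x where "x \<in> {v..u0}" "(f^^(m+2*n)) x = d" by metis
    then show ?thesis by (auto simp: S4_def)
  qed
  have mule: "\<And>x. x \<in> S4 \<Longrightarrow> x \<le> mu" unfolding mu_def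
    by (rule cSup_upper) (auto simp: S4_def bdd_above_def)
  have vmu: "v \<le> mu"
  proof -
    obtain x where "x \<in> S4" using S4ne by blast
    then have "v \<le> x" "x \<le> mu" using mule by (auto simp: S4_def)
    then show ?thesis by simp
  qed
  have main: "\<forall>y \<in> {mu..u0}. \<forall>k. least_period f y k \<and> odd k \<longrightarrow> k \<ge> m + 2 * n"
  proof (intro ballI allI impI)
    fix y k assume y: "y \<in> {mu..u0}" and kk: "least_period f y k \<and> odd k"
    have fk: "(f^^k) y = y" "0 < k" "odd k" using kk by (auto simp: least_period_def)
    have yr: "v \<le> y" "y \<le> u0" using y vmu by auto
    show "k \<ge> m + 2 * n"
    proof (rule ccontr)
      assume lt: "\<not> k \<ge> m + 2 * n"
      show False
      proof (cases "k = 1")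
        case True
        then have "f y = y" using fk by simp
        then have "(f^^2) y = y" by (simp add: numeral_2_eq_2)
        then have "y \<in> S1" using yr u0r z0r by (auto simp: S1_def)
        then have "y = z0" "y = u0" using z0le yr u0r by fastforce+
        then have "d = z0" using u0r \<open>(f^^2) y = y\<close> by simp
        then show False using dr vz0 by simp
      next
        case False
        then have k3: "3 \<le> k" using fk by presburger
        have "f^^(2+k) = f^^2 \<circ> f^^k" by (rule funpow_add)
        then have b1: "(f^^(k+2)) y \<le> d"
          using gle[OF yr] fk by (simp add: add.commute)
        have b2: "(f^^(k+2)) u0 = f z0" by (rule fodd) (use k3 fk in auto)
        have "k + 2 + 2 * ((m + 2*n - k - 2) div 2) = m + 2 * n"
          using lt fk m by presburger
        moreover have "\<forall>s\<in>{d..z0}. \<exists>x\<in>{y..u0}. (f^^(k + 2 + 2 * ((m + 2*n - k - 2) div 2))) x = s"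
          by (rule cover[OF cont maps]) (use uab u0r b1 b2 dr fz0 yr in auto)
        moreover have "d \<in> {d..z0}" using dr vz0 by auto
        ultimately obtain x where x: "x \<in> {y..u0}" "(f^^(m+2*n)) x = d" by metis
        then have "x \<in> S4" using yr by (auto simp: S4_def)
        then have "x \<le> mu" by (rule mule)
        then have "x = y" using x y by auto
        then have fy: "(f^^(m+2*n)) y = d" using x by simp
        have "(f^^k) d = d"
        proof -
          have h1: "f^^(k + (m+2*n)) = f^^k \<circ> f^^(m+2*n)" by (rule funpow_add)
          have h2: "f^^((m+2*n) + k) = f^^(m+2*n) \<circ> f^^k" by (rule funpow_add)
          have "(f^^k) d = (f^^(k + (m+2*n))) y" using fy h1 by simp
          also have "\<dots> = (f^^(m+2*n)) ((f^^k) y)" using h2 by (simp add: add.commute)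
          finally show ?thesis using fk fy by simp
        qed
        moreover have "f^^(k+k) = f^^k \<circ> f^^k" by (rule funpow_add)
        ultimately have c1: "(f^^(2*k)) d = d" by (simp add: mult_2)
        have "(f^^(2*k)) d = ((f^^2)^^(k-1)) ((f^^2) d)"
          using fk by (metis gpow Suc_pred' comp_apply funpow_Suc_right)
        also have "\<dots> = z0" using dr z0r funpow_fixed[of "f^^2" z0] by simp
        finally show False using c1 dr vz0 by simp
      qed
    qed
  qed
  show "let P = (\<lambda>i. (f ^^ i) p0) ` {..<m};
         z0 = Inf {x \<in> {v..z}. (f ^^ 2) x = x};
         d = Sup {x \<in> {Min P..v}. (f ^^ 2) x = z0};
         u0 = Inf {x \<in> {v..z0}. (f ^^ 2) x = d};
         mu = Sup {x \<in> {v..u0}. (f ^^ (m + 2 * n)) x = d}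
     in \<forall>y \<in> {mu..u0}. \<forall>k. least_period f y k \<and> odd k \<longrightarrow> k \<ge> m + 2 * n"
    unfolding Let_def P_def[symmetric] p_def[symmetric] S1_def[symmetric] z0_def[symmetric]
      S2_def[symmetric] d_def[symmetric] S3_def[symmetric] u0_def[symmetric]
      S4_def[symmetric] mu_def[symmetric]
    using main .
qed

end
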